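(* Let $F\colon\mathscr C\to\mathscr D$ be a strict symmetric monoidal functor between small permutative categories. Then $F$ is an equivalence of underlying categories if and only if $\Phi(F)\colon\Phi(\mathscr C)\to\Phi(\mathscr D)$ is an equivalence of underlying categories.
   Context: A permutative category is a symmetric monoidal category $(\mathscr C,\otimes,\mathbf 1,\tau)$ whose associativity and unit isomorphisms are identities. For $\sigma\in\Sigma_m$ the coherence isomorphism $\bigotimes_{i=1}^mX_i\to\bigotimes_{i=1}^mX_{\sigma^{-1}(i)}$ associated to $\sigma$ is the composite of maps $\mathrm{id}\otimes\tau_{X,Y}\otimes\mathrm{id}$ along a decomposition of $\sigma$ into adjacent transpositions. Let $\omega=\{1,2,\dots\}$ and $\mathcal M$ the monoid of injections $\omega\to\omega$. For a small permutative category $\mathscr C$, $\Phi(\mathscr C)$ is the category whose objects are sequences $X=(X_1,X_2,\dots)$ of objects of $\mathscr C$ with $X_i=\mathbf 1$ for almost all $i$, with $\mathrm{Hom}_{\Phi(\mathscr C)}(X,Y)=\mathrm{Hom}_{\mathscr C}(\bigotimes_{i\in\omega}X_i,\bigotimes_{i\in\omega}Y_i)$ (the ordered tensor product of the finitely many non-unit entries) and composition from $\mathscr C$; it carries an action of the monoid $\mathcal M$ with $(u_*X)_i=X_j$ if $i=u(j)$ and $\mathbf 1$ if $i\notin\mathrm{im}(u)$, structure isomorphisms $X\to u_*X$ given by coherence isomorphisms, and a partial sum (merging disjointly supported sequences), making it a parsummable category. For a strict symmetric monoidal functor $F$, $\Phi(F)$ sends $X$ to $(F(X_1),F(X_2),\dots)$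 and a morphism $f$ to $F(f)$. *)

theory Defs
  imports Main
begin

record ('o, 'm) cat =
  Ob   :: "'o set"
  Ar   :: "'m set"
  Dom  :: "'m \<Rightarrow> 'o"
  Cod  :: "'m \<Rightarrow> 'o"
  Idn  :: "'o \<Rightarrow> 'm"
  Comp :: "'m \<Rightarrow> 'm \<Rightarrow> 'm"   (* Comp C g f = g \<circ> f *)

definition hom :: "('o, 'm, 'x) cat_scheme \<Rightarrow> 'o \<Rightarrow> 'o \<Rightarrow> 'm set" where
  "hom C X Y = {f \<in> Ar C. Dom C f = X \<and> Cod C f = Y}"

definition category :: "('o, 'm, 'x) cat_scheme \<Rightarrow> bool" where
  "category C \<longleftrightarrow>
     (\<forall>f\<in>Ar C. Dom C f \<in> Ob C \<and> Cod C f \<in> Ob C) \<and>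
     (\<forall>X\<in>Ob C. Idn C X \<in> hom C X X) \<and>
     (\<forall>f\<in>Ar C. \<forall>g\<in>Ar C. Cod C f = Dom C g \<longrightarrow>
        Comp C g f \<in> hom C (Dom C f) (Cod C g)) \<and>
     (\<forall>f\<in>Ar C. Comp C (Idn C (Cod C f)) f = f \<and> Comp C f (Idn C (Dom C f)) = f) \<and>
     (\<forall>f\<in>Ar C. \<forall>g\<in>Ar C. \<forall>h\<in>Ar C. Cod C f = Dom C g \<longrightarrow> Cod C g = Dom C h \<longrightarrow>
        Comp C h (Comp C g f) = Comp C (Comp C h g) f)"

definition iso :: "('o, 'm, 'x) cat_scheme \<Rightarrow> 'm \<Rightarrow> bool" where
  "iso C f \<longleftrightarrow> f \<in> Ar C \<and>
     (\<exists>g\<in>hom C (Cod C f) (Dom C f). Comp C g f = Idn C (Dom C f) \<and> Comp C f g = Idn C (Cod C f))"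

definition "functor" :: "('o, 'm, 'x) cat_scheme \<Rightarrow> ('p, 'n, 'y) cat_scheme \<Rightarrow>
    ('o \<Rightarrow> 'p) \<Rightarrow> ('m \<Rightarrow> 'n) \<Rightarrow> bool" where
  "functor C D Fo Fa \<longleftrightarrow>
     (\<forall>X\<in>Ob C. Fo X \<in> Ob D) \<and>
     (\<forall>f\<in>Ar C. Fa f \<in> hom D (Fo (Dom C f)) (Fo (Cod C f))) \<and>
     (\<forall>X\<in>Ob C. Fa (Idn C X) = Idn D (Fo X)) \<and>
     (\<forall>f\<in>Ar C. \<forall>g\<in>Ar C. Cod C f = Dom C g \<longrightarrow> Fa (Comp C g f) = Comp D (Fa g) (Fa f))"

definition nat_iso :: "('o, 'm, 'x) cat_scheme \<Rightarrow> ('p, 'n, 'y) cat_scheme \<Rightarrow>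
    ('o \<Rightarrow> 'p) \<Rightarrow> ('m \<Rightarrow> 'n) \<Rightarrow> ('o \<Rightarrow> 'p) \<Rightarrow> ('m \<Rightarrow> 'n) \<Rightarrow> ('o \<Rightarrow> 'n) \<Rightarrow> bool" where
  "nat_iso C D Fo Fa Go Ga \<eta> \<longleftrightarrow>
     (\<forall>X\<in>Ob C. \<eta> X \<in> hom D (Fo X) (Go X) \<and> iso D (\<eta> X)) \<and>
     (\<forall>f\<in>Ar C. Comp D (\<eta> (Cod C f)) (Fa f) = Comp D (Ga f) (\<eta> (Dom C f)))"

definition equivalence :: "('o, 'm, 'x) cat_scheme \<Rightarrow> ('p, 'n, 'y) cat_scheme \<Rightarrow>
    ('o \<Rightarrow> 'p) \<Rightarrow> ('m \<Rightarrow> 'n) \<Rightarrow> bool" where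
  "equivalence C D Fo Fa \<longleftrightarrow> functor C D Fo Fa \<and>
     (\<exists>Go Ga. functor D C Go Ga \<and>
        (\<exists>\<eta>. nat_iso C C id id (Go \<circ> Fo) (Ga \<circ> Fa) \<eta>) \<and>
        (\<exists>\<epsilon>. nat_iso D D (Fo \<circ> Go) (Fa \<circ> Ga) id id \<epsilon>))"

record ('o, 'm) pcat = "('o, 'm) cat" +
  Ten  :: "'o \<Rightarrow> 'o \<Rightarrow> 'o"
  TenA :: "'m \<Rightarrow> 'm \<Rightarrow> 'm"
  Unit :: "'o"
  Sym  :: "'o \<Rightarrow> 'o \<Rightarrow> 'm"

definition permutative :: "('o, 'm, 'x) pcat_scheme \<Rightarrow> bool" where
  "permutative C \<longleftrightarrow> category C \<and>
     Unit C \<in> Ob C \<and>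
     \<comment> \<open>tensor is a bifunctor\<close>
     (\<forall>X\<in>Ob C. \<forall>Y\<in>Ob C. Ten C X Y \<in> Ob C) \<and>
     (\<forall>f\<in>Ar C. \<forall>g\<in>Ar C. TenA C f g \<in> hom C (Ten C (Dom C f) (Dom C g)) (Ten C (Cod C f) (Cod C g))) \<and>
     (\<forall>X\<in>Ob C. \<forall>Y\<in>Ob C. TenA C (Idn C X) (Idn C Y) = Idn C (Ten C X Y)) \<and>
     (\<forall>f\<in>Ar C. \<forall>g\<in>Ar C. \<forall>f'\<in>Ar C. \<forall>g'\<in>Ar C. Cod C f = Dom C g \<longrightarrow> Cod C f' = Dom C g' \<longrightarrow>
        TenA C (Comp C g f) (Comp C g' f') = Comp C (TenA C g g') (TenA C f f')) \<and>
     \<comment> \<open>strict associativity and unit\<close>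
     (\<forall>X\<in>Ob C. \<forall>Y\<in>Ob C. \<forall>Z\<in>Ob C. Ten C (Ten C X Y) Z = Ten C X (Ten C Y Z)) \<and>
     (\<forall>f\<in>Ar C. \<forall>g\<in>Ar C. \<forall>h\<in>Ar C. TenA C (TenA C f g) h = TenA C f (TenA C g h)) \<and>
     (\<forall>X\<in>Ob C. Ten C (Unit C) X = X \<and> Ten C X (Unit C) = X) \<and>
     (\<forall>f\<in>Ar C. TenA C (Idn C (Unit C)) f = f \<and> TenA C f (Idn C (Unit C)) = f) \<and>
     \<comment> \<open>symmetry: natural, involutive, hexagon, unit condition\<close>
     (\<forall>X\<in>Ob C. \<forall>Y\<in>Ob C. Sym C X Y \<in> hom C (Ten C X Y) (Ten C Y X)) \<and>
     (\<forall>f\<in>Ar C. \<forall>g\<in>Ar C. Comp C (Sym C (Cod C f) (Cod C g)) (TenA C f g)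
                         = Comp C (TenA C g f) (Sym C (Dom C f) (Dom C g))) \<and>
     (\<forall>X\<in>Ob C. \<forall>Y\<in>Ob C. Comp C (Sym C Y X) (Sym C X Y) = Idn C (Ten C X Y)) \<and>
     (\<forall>X\<in>Ob C. \<forall>Y\<in>Ob C. \<forall>Z\<in>Ob C. Sym C X (Ten C Y Z)
        = Comp C (TenA C (Idn C Y) (Sym C X Z)) (TenA C (Sym C X Y) (Idn C Z))) \<and>
     (\<forall>X\<in>Ob C. Sym C X (Unit C) = Idn C X)"

definition strict_sym_monoidal_functor :: "('o, 'm, 'x) pcat_scheme \<Rightarrow> ('p, 'n, 'y) pcat_scheme \<Rightarrow>
    ('o \<Rightarrow> 'p) \<Rightarrow> ('m \<Rightarrow> 'n) \<Rightarrow> bool" where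
  "strict_sym_monoidal_functor C D Fo Fa \<longleftrightarrow> functor C D Fo Fa \<and>
     (\<forall>X\<in>Ob C. \<forall>Y\<in>Ob C. Fo (Ten C X Y) = Ten D (Fo X) (Fo Y)) \<and>
     (\<forall>f\<in>Ar C. \<forall>g\<in>Ar C. Fa (TenA C f g) = TenA D (Fa f) (Fa g)) \<and>
     Fo (Unit C) = Unit D \<and>
     (\<forall>X\<in>Ob C. \<forall>Y\<in>Ob C. Fa (Sym C X Y) = Sym D (Fo X) (Fo Y))"

text \<open>Ordered tensor product of a finitely supported sequence (indexed by \<open>nat\<close>):
  tensoring the entries up to the end of the support; by strict unitality this is
  the ordered tensor product of the non-unit entries.\<close>
definition bigten :: "('o, 'm, 'x) pcat_scheme \<Rightarrow> (nat \<Rightarrow> 'o) \<Rightarrow> 'o" where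
  "bigten C X = foldr (Ten C) (map X [0..<(LEAST n. \<forall>i\<ge>n. X i = Unit C)]) (Unit C)"

definition Phi_obs :: "('o, 'm, 'x) pcat_scheme \<Rightarrow> (nat \<Rightarrow> 'o) set" where
  "Phi_obs C = {X. (\<forall>i. X i \<in> Ob C) \<and> finite {i. X i \<noteq> Unit C}}"

definition Phi :: "('o, 'm, 'x) pcat_scheme \<Rightarrow> (nat \<Rightarrow> 'o, (nat \<Rightarrow> 'o) \<times> (nat \<Rightarrow> 'o) \<times> 'm) cat" where
  "Phi C = \<lparr> Ob = Phi_obs C,
             Ar = {(X, Y, f) | X Y f. X \<in> Phi_obs C \<and> Y \<in> Phi_obs C \<and> f \<in> hom C (bigten C X) (bigten C Y)},
             Dom = (\<lambda>(X, Y, f). X),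
             Cod = (\<lambda>(X, Y, f). Y),
             Idn = (\<lambda>X. (X, X, Idn C (bigten C X))),
             Comp = (\<lambda>(Y', Z, g) (X, Y, f). (X, Z, Comp C g f)) \<rparr>"

definition Phi_ob :: "('o \<Rightarrow> 'p) \<Rightarrow> (nat \<Rightarrow> 'o) \<Rightarrow> (nat \<Rightarrow> 'p)" where
  "Phi_ob Fo X = (\<lambda>i. Fo (X i))"

definition Phi_ar :: "('o \<Rightarrow> 'p) \<Rightarrow> ('m \<Rightarrow> 'n) \<Rightarrow>
    (nat \<Rightarrow> 'o) \<times> (nat \<Rightarrow> 'o) \<times> 'm \<Rightarrow> (nat \<Rightarrow> 'p) \<times> (nat \<Rightarrow> 'p) \<times> 'n" where
  "Phi_ar Fo Fa = (\<lambda>(X, Y, f). (Phi_ob Fo X, Phi_ob Fo Y, Fa f))"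

end

theory Submission
  imports Defs
begin


lemma hom_iff: "f \<in> hom C X Y \<longleftrightarrow> f \<in> Ar C \<and> Dom C f = X \<and> Cod C f = Y"
  by (simp add: hom_def)

context fixes C :: "('o, 'm, 'x) cat_scheme" assumes cat: "category C"
begin

lemma cat_Dom_Ob[simp]: "f \<in> Ar C \<Longrightarrow> Dom C f \<in> Ob C"
  using cat unfolding category_def by blast
lemma cat_Cod_Ob[simp]: "f \<in> Ar C \<Longrightarrow> Cod C f \<in> Ob C"
  using cat unfolding category_def by blast
lemma cat_Idn[simp]: "X \<in> Ob C \<Longrightarrow> Idn C X \<in> Ar C"
  "X \<in> Ob C \<Longrightarrow> Dom C (Idn C X) = X" "X \<in> Ob C \<Longrightarrow> Cod C (Idn C X) = X"
  using cat unfolding category_def hom_def by blast+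
lemma cat_Comp[simp]: "f \<in> Ar C \<Longrightarrow> g \<in> Ar C \<Longrightarrow> Cod C f = Dom C g \<Longrightarrow> Comp C g f \<in> Ar C"
  "f \<in> Ar C \<Longrightarrow> g \<in> Ar C \<Longrightarrow> Cod C f = Dom C g \<Longrightarrow> Dom C (Comp C g f) = Dom C f"
  "f \<in> Ar C \<Longrightarrow> g \<in> Ar C \<Longrightarrow> Cod C f = Dom C g \<Longrightarrow> Cod C (Comp C g f) = Cod C g"
  using cat unfolding category_def hom_def by blast+
lemma cat_idl[simp]: "f \<in> Ar C \<Longrightarrow> Cod C f = Y \<Longrightarrow> Comp C (Idn C Y) f = f"
  using cat unfolding category_def by blast
lemma cat_idr[simp]: "f \<in> Ar C \<Longrightarrow> Dom C f = X \<Longrightarrow> Comp C f (Idn C X) = f"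
  using cat unfolding category_def by blast
lemma cat_assoc[simp]: "f \<in> Ar C \<Longrightarrow> g \<in> Ar C \<Longrightarrow> h \<in> Ar C \<Longrightarrow> Cod C f = Dom C g \<Longrightarrow> Cod C g = Dom C h \<Longrightarrow>
   Comp C (Comp C h g) f = Comp C h (Comp C g f)"
  using cat unfolding category_def by metis

end

definition inv_ar :: "('o, 'm, 'x) cat_scheme \<Rightarrow> 'm \<Rightarrow> 'm" where
  "inv_ar C f = (SOME g. g \<in> hom C (Cod C f) (Dom C f) \<and> Comp C g f = Idn C (Dom C f) \<and> Comp C f g = Idn C (Cod C f))"

lemma inv_ar_props:
  assumes "iso C f"
  shows "inv_ar C f \<in> hom C (Cod C f) (Dom C f) \<and> Comp C (inv_ar C f) f = Idn C (Dom C f) \<and> Comp C f (inv_ar C f) = Idn C (Cod C f)"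
  unfolding inv_ar_def by (rule someI_ex) (use assms in \<open>unfold iso_def, blast\<close>)

context fixes C :: "('o, 'm, 'x) cat_scheme" assumes cat: "category C"
begin

lemma iso_Ar[simp]: "iso C f \<Longrightarrow> f \<in> Ar C" by (simp add: iso_def)
lemma inv_ar[simp]: assumes "iso C f"
  shows "inv_ar C f \<in> Ar C" "Dom C (inv_ar C f) = Cod C f" "Cod C (inv_ar C f) = Dom C f"
    "Comp C (inv_ar C f) f = Idn C (Dom C f)" "Comp C f (inv_ar C f) = Idn C (Cod C f)"
  using inv_ar_props[OF assms] unfolding hom_def by blast+

lemma inv_ar2[simp]: assumes "iso C f"
  shows "g \<in> Ar C \<Longrightarrow> Cod C g = Dom C f \<Longrightarrow> Comp C (inv_ar C f) (Comp C f g) = g"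
    "g \<in> Ar C \<Longrightarrow> Cod C g = Cod C f \<Longrightarrow> Comp C f (Comp C (inv_ar C f) g) = g"
proof -
  show "g \<in> Ar C \<Longrightarrow> Cod C g = Dom C f \<Longrightarrow> Comp C (inv_ar C f) (Comp C f g) = g"
  proof -
    assume g: "g \<in> Ar C" "Cod C g = Dom C f"
    have "Comp C (inv_ar C f) (Comp C f g) = Comp C (Comp C (inv_ar C f) f) g"
      by (rule cat_assoc[OF cat, symmetric]) (use g assms cat in simp_all)
    also have "\<dots> = g" using g assms cat by simp
    finally show ?thesis .
  qed
  show "g \<in> Ar C \<Longrightarrow> Cod C g = Cod C f \<Longrightarrow> Comp C f (Comp C (inv_ar C f) g) = g"
  proof -
    assume g: "g \<in> Ar C" "Cod C g = Cod C f"
    have "Comp C f (Comp C (inv_ar C f) g) = Comp C (Comp C f (inv_ar C f)) g"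
      by (rule cat_assoc[OF cat, symmetric]) (use g assms cat in simp_all)
    also have "\<dots> = g" using g assms cat by simp
    finally show ?thesis .
  qed
qed

lemma iso_inv[simp]: assumes a: "iso C f" shows "iso C (inv_ar C f)"
proof -
  have h: "f \<in> hom C (Cod C (inv_ar C f)) (Dom C (inv_ar C f))" using a by (simp add: hom_iff)
  show ?thesis unfolding iso_def using a h by (intro conjI bexI[of _ f]) simp_all
qed

lemma iso_Idn[simp]: assumes a: "X \<in> Ob C" shows "iso C (Idn C X)"
proof -
  have h: "Idn C X \<in> hom C (Cod C (Idn C X)) (Dom C (Idn C X))" using a cat by (simp add: hom_iff)
  show ?thesis unfolding iso_def using a h cat by (intro conjI bexI[of _ "Idn C X"]) simp_all
qed

lemma cancel_l: assumes "iso C h" "f \<in> Ar C" "f' \<in> Ar C" "Cod C f = Dom C h" "Cod C f' = Dom C h"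
  "Comp C h f = Comp C h f'" shows "f = f'"
proof -
  have "f = Comp C (inv_ar C h) (Comp C h f)" using assms(1-5) cat by simp
  also have "\<dots> = f'" using assms cat by simp
  finally show ?thesis .
qed

lemma cancel_r: assumes "iso C h" "f \<in> Ar C" "f' \<in> Ar C" "Dom C f = Cod C h" "Dom C f' = Cod C h"
  "Comp C f h = Comp C f' h" shows "f = f'"
proof -
  have "f = Comp C (Comp C f h) (inv_ar C h)" using assms(1-5) cat by simp
  also have "\<dots> = f'" using assms cat by simp
  finally show ?thesis .
qed

end

context fixes C :: "('o, 'm, 'x) cat_scheme" and D :: "('p, 'n, 'y) cat_scheme"
  and Fo Fa assumes Fun: "functor C D Fo Fa"
begin
lemma fun_Ob[simp]: "X \<in> Ob C \<Longrightarrow> Fo X \<in> Ob D" using Fun unfolding functor_def by blast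
lemma fun_Ar[simp]: "f \<in> Ar C \<Longrightarrow> Fa f \<in> Ar D" "f \<in> Ar C \<Longrightarrow> Dom D (Fa f) = Fo (Dom C f)"
  "f \<in> Ar C \<Longrightarrow> Cod D (Fa f) = Fo (Cod C f)"
  using Fun unfolding functor_def hom_def by blast+
lemma fun_Idn[simp]: "X \<in> Ob C \<Longrightarrow> Fa (Idn C X) = Idn D (Fo X)" using Fun unfolding functor_def by blast
lemma fun_Comp[simp]: "f \<in> Ar C \<Longrightarrow> g \<in> Ar C \<Longrightarrow> Cod C f = Dom C g \<Longrightarrow> Fa (Comp C g f) = Comp D (Fa g) (Fa f)"
  using Fun unfolding functor_def by blast
end


definition faithful :: "('o, 'm, 'x) cat_scheme \<Rightarrow> ('m \<Rightarrow> 'n) \<Rightarrow> bool" where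
  "faithful C Fa \<longleftrightarrow> (\<forall>f\<in>Ar C. \<forall>g\<in>Ar C. Dom C f = Dom C g \<longrightarrow> Cod C f = Cod C g \<longrightarrow> Fa f = Fa g \<longrightarrow> f = g)"
definition full :: "('o, 'm, 'x) cat_scheme \<Rightarrow> ('p, 'n, 'y) cat_scheme \<Rightarrow> ('o \<Rightarrow> 'p) \<Rightarrow> ('m \<Rightarrow> 'n) \<Rightarrow> bool" where
  "full C D Fo Fa \<longleftrightarrow> (\<forall>X\<in>Ob C. \<forall>Y\<in>Ob C. \<forall>g\<in>hom D (Fo X) (Fo Y). \<exists>f\<in>hom C X Y. Fa f = g)"
definition ess_surj :: "('o, 'm, 'x) cat_scheme \<Rightarrow> ('p, 'n, 'y) cat_scheme \<Rightarrow> ('o \<Rightarrow> 'p) \<Rightarrow> bool" where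
  "ess_surj C D Fo \<longleftrightarrow> (\<forall>B\<in>Ob D. \<exists>A\<in>Ob C. \<exists>g. g \<in> hom D (Fo A) B \<and> iso D g)"

lemma equiv_imp:
  assumes cC: "category C" and cD: "category D" and E: "equivalence C D Fo Fa"
  shows "faithful C Fa \<and> full C D Fo Fa \<and> ess_surj C D Fo"
proof -
  have F: "functor C D Fo Fa" using E unfolding equivalence_def by blast
  obtain Go Ga \<eta> \<epsilon> where G: "functor D C Go Ga" and N1: "nat_iso C C id id (Go \<circ> Fo) (Ga \<circ> Fa) \<eta>"
    and N2: "nat_iso D D (Fo \<circ> Go) (Fa \<circ> Ga) id id \<epsilon>"
    using E unfolding equivalence_def by blast
  have eta: "\<And>X. X \<in> Ob C \<Longrightarrow> \<eta> X \<in> Ar C \<and> Dom C (\<eta> X) = X \<and> Cod C (\<eta> X) = Go (Fo X) \<and> iso C (\<eta> X)"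
    using N1 unfolding nat_iso_def hom_def by auto
  have eta_nat: "\<And>f. f \<in> Ar C \<Longrightarrow> Comp C (\<eta> (Cod C f)) f = Comp C (Ga (Fa f)) (\<eta> (Dom C f))"
    using N1 unfolding nat_iso_def by auto
  have eps: "\<And>B. B \<in> Ob D \<Longrightarrow> \<epsilon> B \<in> Ar D \<and> Dom D (\<epsilon> B) = Fo (Go B) \<and> Cod D (\<epsilon> B) = B \<and> iso D (\<epsilon> B)"
    using N2 unfolding nat_iso_def hom_def by auto
  have eps_nat: "\<And>h. h \<in> Ar D \<Longrightarrow> Comp D (\<epsilon> (Cod D h)) (Fa (Ga h)) = Comp D h (\<epsilon> (Dom D h))"
    using N2 unfolding nat_iso_def by auto
  have GF: "h = h'" if h: "h \<in> Ar D" "h' \<in> Ar D" "Dom D h = Dom D h'" "Cod D h = Cod D h'" "Ga h = Ga h'" for h h'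
  proof (rule cancel_r[OF cD, where h = "\<epsilon> (Dom D h)"])
    show "Comp D h (\<epsilon> (Dom D h)) = Comp D h' (\<epsilon> (Dom D h))"
      using eps_nat[of h] eps_nat[of h'] h by simp
  qed (use h eps[of "Dom D h"] cD in auto)
  have faith: "faithful C Fa" unfolding faithful_def
  proof (intro ballI impI)
    fix f f' assume f: "f \<in> Ar C" "f' \<in> Ar C" "Dom C f = Dom C f'" "Cod C f = Cod C f'" "Fa f = Fa f'"
    show "f = f'"
    proof (rule cancel_l[OF cC, where h = "\<eta> (Cod C f)"])
      show "Comp C (\<eta> (Cod C f)) f = Comp C (\<eta> (Cod C f)) f'"
        using eta_nat[of f] eta_nat[of f'] f by simp
    qed (use f eta[of "Cod C f"] cC in auto)
  qed
  have ful: "full C D Fo Fa" unfolding full_def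
  proof (intro ballI)
    fix X Y g assume X: "X \<in> Ob C" and Y: "Y \<in> Ob C" and g: "g \<in> hom D (Fo X) (Fo Y)"
    have g': "g \<in> Ar D" "Dom D g = Fo X" "Cod D g = Fo Y" using g by (auto simp: hom_def)
    note ex = eta[OF X] eta[OF Y]
    have Gg: "Ga g \<in> Ar C" "Dom C (Ga g) = Go (Fo X)" "Cod C (Ga g) = Go (Fo Y)"
      using g' G by simp_all
    define f where "f = Comp C (inv_ar C (\<eta> Y)) (Comp C (Ga g) (\<eta> X))"
    have fA: "f \<in> Ar C" "Dom C f = X" "Cod C f = Y" unfolding f_def using ex Gg cC by simp_all
    have 1: "Comp C (\<eta> Y) f = Comp C (Ga g) (\<eta> X)" unfolding f_def using ex Gg cC by simp
    have 2: "Ga (Fa f) = Ga g"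
    proof (rule cancel_r[OF cC, where h = "\<eta> X"])
      show "Comp C (Ga (Fa f)) (\<eta> X) = Comp C (Ga g) (\<eta> X)" using eta_nat[of f] fA 1 by simp
    qed (use fA ex Gg F G cC in simp_all)
    have "Fa f = g" by (rule GF) (use fA g' F 2 in simp_all)
    then show "\<exists>f\<in>hom C X Y. Fa f = g" using fA by (auto simp: hom_def)
  qed
  have es: "ess_surj C D Fo" unfolding ess_surj_def
  proof
    fix B assume B: "B \<in> Ob D"
    show "\<exists>A\<in>Ob C. \<exists>g. g \<in> hom D (Fo A) B \<and> iso D g"
      using eps[OF B] G B by (intro bexI[of _ "Go B"] exI[of _ "\<epsilon> B"]) (auto simp: hom_def)
  qed
  show ?thesis using faith ful es by blast
qed


lemma reflect_iso:
  assumes cC: "category C" and cD: "category D" and F: "functor C D Fo Fa"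
    and fa: "faithful C Fa" and fu: "full C D Fo Fa"
    and f: "f \<in> Ar C" and i: "iso D (Fa f)"
  shows "iso C f"
proof -
  let ?X = "Dom C f" and ?Y = "Cod C f"
  have XY: "?X \<in> Ob C" "?Y \<in> Ob C" using f cC by simp_all
  have "inv_ar D (Fa f) \<in> hom D (Fo ?Y) (Fo ?X)" using i f F cD by (simp add: hom_def)
  then obtain g where g: "g \<in> hom C ?Y ?X" "Fa g = inv_ar D (Fa f)" using fu XY unfolding full_def by blast
  have g': "g \<in> Ar C" "Dom C g = ?Y" "Cod C g = ?X" using g by (auto simp: hom_def)
  have faithD: "f = g" if "f \<in> Ar C" "g \<in> Ar C" "Dom C f = Dom C g" "Cod C f = Cod C g" "Fa f = Fa g" for f g
    using fa that unfolding faithful_def by blast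
  have 1: "Comp C g f = Idn C ?X"
    by (rule faithD) (use g' f cC F i g cD in simp_all)
  have 2: "Comp C f g = Idn C ?Y"
    by (rule faithD) (use g' f cC F i g cD in simp_all)
  show ?thesis unfolding iso_def using f g 1 2 by blast
qed

lemma imp_equiv:
  assumes cC: "category C" and cD: "category D" and F: "functor C D Fo Fa"
    and fa: "faithful C Fa" and fu: "full C D Fo Fa" and es: "ess_surj C D Fo"
  shows "equivalence C D Fo Fa"
proof -
  define Go where "Go B = (SOME A. A \<in> Ob C \<and> (\<exists>g. g \<in> hom D (Fo A) B \<and> iso D g))" for B
  define e where "e B = (SOME g. g \<in> hom D (Fo (Go B)) B \<and> iso D g)" for B
  have Go: "Go B \<in> Ob C \<and> (\<exists>g. g \<in> hom D (Fo (Go B)) B \<and> iso D g)" if "B \<in> Ob D" for B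
    unfolding Go_def by (rule someI_ex) (use es that in \<open>unfold ess_surj_def, blast\<close>)
  have e: "e B \<in> hom D (Fo (Go B)) B \<and> iso D (e B)" if "B \<in> Ob D" for B
    unfolding e_def by (rule someI_ex) (use Go[OF that] in blast)
  have GoOb[simp]: "B \<in> Ob D \<Longrightarrow> Go B \<in> Ob C" for B using Go by blast
  have eA[simp]: "B \<in> Ob D \<Longrightarrow> e B \<in> Ar D" "B \<in> Ob D \<Longrightarrow> Dom D (e B) = Fo (Go B)"
    "B \<in> Ob D \<Longrightarrow> Cod D (e B) = B" "B \<in> Ob D \<Longrightarrow> iso D (e B)" for B
    using e by (auto simp: hom_def)
  define pre where "pre X Y g = (SOME f. f \<in> hom C X Y \<and> Fa f = g)" for X Y g
  have pre: "pre X Y g \<in> Ar C \<and> Dom C (pre X Y g) = X \<and> Cod C (pre X Y g) = Y \<and> Fa (pre X Y g) = g"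
    if "X \<in> Ob C" "Y \<in> Ob C" "g \<in> Ar D" "Dom D g = Fo X" "Cod D g = Fo Y" for X Y g
  proof -
    have "\<exists>f. f \<in> hom C X Y \<and> Fa f = g" using fu that unfolding full_def hom_def by blast
    then have "pre X Y g \<in> hom C X Y \<and> Fa (pre X Y g) = g" unfolding pre_def by (rule someI_ex)
    then show ?thesis by (simp add: hom_def)
  qed
  have faithD: "f = g" if "f \<in> Ar C" "g \<in> Ar C" "Dom C f = Dom C g" "Cod C f = Cod C g" "Fa f = Fa g" for f g
    using fa that unfolding faithful_def by blast
  define Ga where "Ga h = pre (Go (Dom D h)) (Go (Cod D h)) (Comp D (inv_ar D (e (Cod D h))) (Comp D h (e (Dom D h))))" for h
  have Ga: "Ga h \<in> Ar C \<and> Dom C (Ga h) = Go (Dom D h) \<and> Cod C (Ga h) = Go (Cod D h) \<and>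
      Fa (Ga h) = Comp D (inv_ar D (e (Cod D h))) (Comp D h (e (Dom D h)))" if h: "h \<in> Ar D" for h
    unfolding Ga_def by (rule pre) (use h cD in simp_all)
  have GaA[simp]: "h \<in> Ar D \<Longrightarrow> Ga h \<in> Ar C" "h \<in> Ar D \<Longrightarrow> Dom C (Ga h) = Go (Dom D h)"
    "h \<in> Ar D \<Longrightarrow> Cod C (Ga h) = Go (Cod D h)"
    "h \<in> Ar D \<Longrightarrow> Fa (Ga h) = Comp D (inv_ar D (e (Cod D h))) (Comp D h (e (Dom D h)))" for h
    using Ga by blast+
  have G: "functor D C Go Ga" unfolding functor_def
  proof (intro conjI ballI impI)
    fix B assume B: "B \<in> Ob D"
    show "Go B \<in> Ob C" using B by simp
    show "Ga (Idn D B) = Idn C (Go B)"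
      by (rule faithD) (use B cD cC F in simp_all)
  next
    fix h assume h: "h \<in> Ar D"
    show "Ga h \<in> hom C (Go (Dom D h)) (Go (Cod D h))" using h by (simp add: hom_def)
  next
    fix h h' assume h: "h \<in> Ar D" "h' \<in> Ar D" "Cod D h = Dom D h'"
    show "Ga (Comp D h' h) = Comp C (Ga h') (Ga h)"
      by (rule faithD) (use h cD cC F in simp_all)
  qed
  define \<eta> where "\<eta> X = pre X (Go (Fo X)) (inv_ar D (e (Fo X)))" for X
  have eta: "\<eta> X \<in> Ar C \<and> Dom C (\<eta> X) = X \<and> Cod C (\<eta> X) = Go (Fo X) \<and> Fa (\<eta> X) = inv_ar D (e (Fo X))"
    if X: "X \<in> Ob C" for X
    unfolding \<eta>_def by (rule pre) (use X F cD in simp_all)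
  have N1: "nat_iso C C id id (Go \<circ> Fo) (Ga \<circ> Fa) \<eta>" unfolding nat_iso_def
  proof (intro conjI ballI)
    fix X assume X: "X \<in> Ob C"
    show "\<eta> X \<in> hom C (id X) ((Go \<circ> Fo) X)" using eta[OF X] by (simp add: hom_def)
    show "iso C (\<eta> X)"
      by (rule reflect_iso[OF cC cD F fa fu]) (use eta[OF X] X F cD in simp_all)
  next
    fix f assume f: "f \<in> Ar C"
    note ed = eta[of "Dom C f"] eta[of "Cod C f"]
    show "Comp C (\<eta> (Cod C f)) (id f) = Comp C ((Ga \<circ> Fa) f) (\<eta> (Dom C f))"
      by (rule faithD) (use f ed cC cD F in simp_all)
  qed
  have N2: "nat_iso D D (Fo \<circ> Go) (Fa \<circ> Ga) id id e" unfolding nat_iso_def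
  proof (intro conjI ballI)
    fix B assume B: "B \<in> Ob D"
    show "e B \<in> hom D ((Fo \<circ> Go) B) (id B)" using B by (simp add: hom_def)
    show "iso D (e B)" using B by simp
  next
    fix h assume h: "h \<in> Ar D"
    show "Comp D (e (Cod D h)) ((Fa \<circ> Ga) h) = Comp D (id h) (e (Dom D h))"
      using h cD cC F by simp
  qed
  show ?thesis unfolding equivalence_def using F G N1 N2 by blast
qed



lemma equiv_iff:
  assumes "category C" "category D" "functor C D Fo Fa"
  shows "equivalence C D Fo Fa \<longleftrightarrow> faithful C Fa \<and> full C D Fo Fa \<and> ess_surj C D Fo"
  using equiv_imp[OF assms(1,2)] imp_equiv[OF assms] by blast

context fixes C :: "('o, 'm, 'x) pcat_scheme" assumes P: "permutative C"
begin
lemma perm_cat: "category C" using P unfolding permutative_def by (elim conjE; simp)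
lemma perm_Unit[simp]: "Unit C \<in> Ob C" using P unfolding permutative_def by (elim conjE; simp)
lemma perm_Ten[simp]: "X \<in> Ob C \<Longrightarrow> Y \<in> Ob C \<Longrightarrow> Ten C X Y \<in> Ob C" using P unfolding permutative_def by (elim conjE; simp)
lemma perm_TenA[simp]: "f \<in> Ar C \<Longrightarrow> g \<in> Ar C \<Longrightarrow> TenA C f g \<in> Ar C"
  "f \<in> Ar C \<Longrightarrow> g \<in> Ar C \<Longrightarrow> Dom C (TenA C f g) = Ten C (Dom C f) (Dom C g)"
  "f \<in> Ar C \<Longrightarrow> g \<in> Ar C \<Longrightarrow> Cod C (TenA C f g) = Ten C (Cod C f) (Cod C g)"
  using P unfolding permutative_def by (elim conjE; simp add: hom_def)+
lemma perm_TenA_Idn[simp]: "X \<in> Ob C \<Longrightarrow> Y \<in> Ob C \<Longrightarrow> TenA C (Idn C X) (Idn C Y) = Idn C (Ten C X Y)"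
  using P unfolding permutative_def by (elim conjE; simp)
lemma perm_interchange: "f \<in> Ar C \<Longrightarrow> g \<in> Ar C \<Longrightarrow> f' \<in> Ar C \<Longrightarrow> g' \<in> Ar C \<Longrightarrow> Cod C f = Dom C g \<Longrightarrow> Cod C f' = Dom C g' \<Longrightarrow>
        TenA C (Comp C g f) (Comp C g' f') = Comp C (TenA C g g') (TenA C f f')"
  using P unfolding permutative_def by (elim conjE; simp)
lemma perm_unit[simp]: "X \<in> Ob C \<Longrightarrow> Ten C (Unit C) X = X" "X \<in> Ob C \<Longrightarrow> Ten C X (Unit C) = X"
  using P unfolding permutative_def by (elim conjE; simp)+

lemma TenA_iso: assumes f: "iso C f" and g: "iso C g" shows "iso C (TenA C f g)"
proof -
  note cC = perm_cat
  let ?h = "TenA C (inv_ar C f) (inv_ar C g)"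
  have h: "?h \<in> hom C (Cod C (TenA C f g)) (Dom C (TenA C f g))" using f g cC by (simp add: hom_def)
  have 1: "Comp C ?h (TenA C f g) = Idn C (Dom C (TenA C f g))"
    using f g cC by (simp flip: perm_interchange)
  have 2: "Comp C (TenA C f g) ?h = Idn C (Cod C (TenA C f g))"
    using f g cC by (simp flip: perm_interchange)
  show ?thesis unfolding iso_def using f g cC h 1 2 by (intro conjI bexI[of _ ?h]) simp_all
qed

lemma foldr_Ob: "set xs \<subseteq> Ob C \<Longrightarrow> u \<in> Ob C \<Longrightarrow> foldr (Ten C) xs u \<in> Ob C"
  by (induction xs) auto

lemma foldr_iso: "\<forall>g\<in>set gs. iso C g \<Longrightarrow> foldr (TenA C) gs (Idn C (Unit C)) \<in> Ar C \<and>
   Dom C (foldr (TenA C) gs (Idn C (Unit C))) = foldr (Ten C) (map (Dom C) gs) (Unit C) \<and>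
   Cod C (foldr (TenA C) gs (Idn C (Unit C))) = foldr (Ten C) (map (Cod C) gs) (Unit C) \<and>
   iso C (foldr (TenA C) gs (Idn C (Unit C)))"
proof (induction gs)
  case Nil then show ?case using perm_cat by simp
next
  case (Cons g gs) then show ?case using perm_cat TenA_iso by simp
qed
end

definition tn :: "('o, 'm, 'x) pcat_scheme \<Rightarrow> (nat \<Rightarrow> 'o) \<Rightarrow> nat \<Rightarrow> 'o" where
  "tn C X N = foldr (Ten C) (map X [0..<N]) (Unit C)"

lemma tn_Suc: "permutative C \<Longrightarrow> X M = Unit C \<Longrightarrow> tn C X (Suc M) = tn C X M"
  unfolding tn_def by simp

lemma bigten_tn:
  assumes P: "permutative C" and N: "\<forall>i\<ge>N. X i = Unit C"
  shows "bigten C X = tn C X N"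
proof -
  define L where "L = (LEAST n. \<forall>i\<ge>n. X i = Unit C)"
  have ex: "\<exists>n. \<forall>i\<ge>n. X i = Unit C" using N by blast
  have LN: "L \<le> N" unfolding L_def by (rule Least_le) (rule N)
  have LU: "\<forall>i\<ge>L. X i = Unit C" unfolding L_def by (rule LeastI_ex) (rule ex)
  have "tn C X M = tn C X L" if "L \<le> M" for M
    using that
  proof (induction M rule: dec_induct)
    case base then show ?case by (rule refl)
  next
    case (step n)
    have "X n = Unit C" using LU step(1) by blast
    then have "tn C X (Suc n) = tn C X n" by (rule tn_Suc[OF P])
    then show ?case using step(3) by (rule trans)
  qed
  then have "tn C X N = tn C X L" using LN by blast
  moreover have "bigten C X = tn C X L" unfolding bigten_def tn_def L_def by (rule refl)
  ultimately show ?thesis by simp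
qed

lemma Phi_obs_bound: "X \<in> Phi_obs C \<Longrightarrow> \<exists>N. \<forall>i\<ge>N. X i = Unit C"
proof -
  assume "X \<in> Phi_obs C"
  then have "finite {i. X i \<noteq> Unit C}" by (simp add: Phi_obs_def)
  then obtain k where "\<forall>i\<in>{i. X i \<noteq> Unit C}. i < k" unfolding finite_nat_set_iff_bounded by blast
  then have "\<forall>i\<ge>k. X i = Unit C" by (meson mem_Collect_eq not_le)
  then show ?thesis by blast
qed

lemma tn_Ob: "permutative C \<Longrightarrow> \<forall>i. X i \<in> Ob C \<Longrightarrow> tn C X N \<in> Ob C"
  unfolding tn_def by (rule foldr_Ob) auto

lemma bigten_Ob: "permutative C \<Longrightarrow> X \<in> Phi_obs C \<Longrightarrow> bigten C X \<in> Ob C"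
proof -
  assume P: "permutative C" and X: "X \<in> Phi_obs C"
  obtain N where N: "\<forall>i\<ge>N. X i = Unit C" using Phi_obs_bound[OF X] by blast
  have "\<forall>i. X i \<in> Ob C" using X by (simp add: Phi_obs_def)
  then show ?thesis using bigten_tn[OF P N] tn_Ob[OF P] by simp
qed


lemma Phi_Ob[simp]: "Ob (Phi C) = Phi_obs C" by (simp add: Phi_def)
lemma Phi_Ar: "p \<in> Ar (Phi C) \<longleftrightarrow> (\<exists>X Y f. p = (X, Y, f) \<and> X \<in> Phi_obs C \<and> Y \<in> Phi_obs C \<and> f \<in> hom C (bigten C X) (bigten C Y))"
  by (simp add: Phi_def)
lemma Phi_Ar_trip[simp]: "(X, Y, f) \<in> Ar (Phi C) \<longleftrightarrow> X \<in> Phi_obs C \<and> Y \<in> Phi_obs C \<and> f \<in> hom C (bigten C X) (bigten C Y)"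
  by (simp add: Phi_def)
lemma Phi_DC[simp]: "Dom (Phi C) (X, Y, f) = X" "Cod (Phi C) (X, Y, f) = Y"
  "Idn (Phi C) X = (X, X, Idn C (bigten C X))" "Comp (Phi C) (Y', Z, g) (X, Y, f) = (X, Z, Comp C g f)"
  by (simp_all add: Phi_def)

lemma Phi_Ar_cases: assumes "p \<in> Ar (Phi C)"
  obtains X Y f where "p = (X, Y, f)" "X \<in> Phi_obs C" "Y \<in> Phi_obs C" "f \<in> Ar C" "Dom C f = bigten C X" "Cod C f = bigten C Y"
  using assms unfolding Phi_Ar hom_def by blast

definition sing :: "('o, 'm, 'x) pcat_scheme \<Rightarrow> 'o \<Rightarrow> nat \<Rightarrow> 'o" where
  "sing C A = (\<lambda>i. if i = 0 then A else Unit C)"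

context fixes C :: "('o, 'm, 'x) pcat_scheme" assumes P: "permutative C"
begin

lemma bigten_Ob'[simp]: "X \<in> Phi_obs C \<Longrightarrow> bigten C X \<in> Ob C" by (rule bigten_Ob[OF P])

lemma Phi_category: "category (Phi C)"
proof -
  note cC = perm_cat[OF P]
  show ?thesis unfolding category_def
  proof (intro conjI ballI impI)
    fix p assume "p \<in> Ar (Phi C)"
    then obtain X Y f where p': "p = (X, Y, f)" "X \<in> Phi_obs C" "Y \<in> Phi_obs C"
      by (cases rule: Phi_Ar_cases)
    show "Dom (Phi C) p \<in> Ob (Phi C)" "Cod (Phi C) p \<in> Ob (Phi C)" using p' by simp_all
  next
    fix X assume "X \<in> Ob (Phi C)"
    then show "Idn (Phi C) X \<in> hom (Phi C) X X" using cC by (simp add: hom_def)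
  next
    fix p q assume p: "p \<in> Ar (Phi C)" and q: "q \<in> Ar (Phi C)" and pq: "Cod (Phi C) p = Dom (Phi C) q"
    from p obtain X Y f where p': "p = (X, Y, f)" "X \<in> Phi_obs C" "Y \<in> Phi_obs C" "f \<in> Ar C" "Dom C f = bigten C X" "Cod C f = bigten C Y"
      by (cases rule: Phi_Ar_cases)
    from q obtain Y' Z g where q': "q = (Y', Z, g)" "Y' \<in> Phi_obs C" "Z \<in> Phi_obs C" "g \<in> Ar C" "Dom C g = bigten C Y'" "Cod C g = bigten C Z"
      by (cases rule: Phi_Ar_cases)
    have "Y' = Y" using pq p' q' by simp
    then show "Comp (Phi C) q p \<in> hom (Phi C) (Dom (Phi C) p) (Cod (Phi C) q)"
      using p' q' cC by (simp add: hom_def)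
  next
    fix p assume "p \<in> Ar (Phi C)"
    then obtain X Y f where p': "p = (X, Y, f)" "X \<in> Phi_obs C" "Y \<in> Phi_obs C" "f \<in> Ar C" "Dom C f = bigten C X" "Cod C f = bigten C Y"
      by (cases rule: Phi_Ar_cases)
    show "Comp (Phi C) (Idn (Phi C) (Cod (Phi C) p)) p = p" "Comp (Phi C) p (Idn (Phi C) (Dom (Phi C) p)) = p"
      using p' cC by simp_all
  next
    fix p q r assume p: "p \<in> Ar (Phi C)" and q: "q \<in> Ar (Phi C)" and r: "r \<in> Ar (Phi C)"
      and pq: "Cod (Phi C) p = Dom (Phi C) q" and qr: "Cod (Phi C) q = Dom (Phi C) r"
    from p obtain X Y f where p': "p = (X, Y, f)" "X \<in> Phi_obs C" "Y \<in> Phi_obs C" "f \<in> Ar C" "Dom C f = bigten C X" "Cod C f = bigten C Y"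
      by (cases rule: Phi_Ar_cases)
    from q obtain Y' Z g where q': "q = (Y', Z, g)" "Y' \<in> Phi_obs C" "Z \<in> Phi_obs C" "g \<in> Ar C" "Dom C g = bigten C Y'" "Cod C g = bigten C Z"
      by (cases rule: Phi_Ar_cases)
    from r obtain Z' W h where r': "r = (Z', W, h)" "Z' \<in> Phi_obs C" "W \<in> Phi_obs C" "h \<in> Ar C" "Dom C h = bigten C Z'" "Cod C h = bigten C W"
      by (cases rule: Phi_Ar_cases)
    have "Y' = Y" "Z' = Z" using pq qr p' q' r' by simp_all
    then show "Comp (Phi C) r (Comp (Phi C) q p) = Comp (Phi C) (Comp (Phi C) r q) p"
      using p' q' r' cC by simp
  qed
qed

lemma Phi_iso: assumes X: "X \<in> Phi_obs C" and Y: "Y \<in> Phi_obs C" and f: "f \<in> hom C (bigten C X) (bigten C Y)"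
  shows "iso (Phi C) (X, Y, f) \<longleftrightarrow> iso C f"
proof
  note cC = perm_cat[OF P]
  have f': "f \<in> Ar C" "Dom C f = bigten C X" "Cod C f = bigten C Y" using f by (auto simp: hom_def)
  assume i: "iso (Phi C) (X, Y, f)"
  then obtain q where q: "q \<in> hom (Phi C) Y X" "Comp (Phi C) q (X, Y, f) = Idn (Phi C) X"
    "Comp (Phi C) (X, Y, f) q = Idn (Phi C) Y"
    unfolding iso_def by auto
  then have "q \<in> Ar (Phi C)" "Dom (Phi C) q = Y" "Cod (Phi C) q = X" by (auto simp: hom_def)
  then obtain g where g: "q = (Y, X, g)" "g \<in> Ar C" "Dom C g = bigten C Y" "Cod C g = bigten C X"
    by (cases rule: Phi_Ar_cases) auto
  have "Comp C g f = Idn C (bigten C X)" "Comp C f g = Idn C (bigten C Y)" using q(2,3) g by simp_all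
  then show "iso C f" unfolding iso_def using f' g by (intro conjI bexI[of _ g]) (simp_all add: hom_def)
next
  note cC = perm_cat[OF P]
  have f': "f \<in> Ar C" "Dom C f = bigten C X" "Cod C f = bigten C Y" using f by (auto simp: hom_def)
  assume i: "iso C f"
  let ?q = "(Y, X, inv_ar C f)"
  have q: "?q \<in> hom (Phi C) (Cod (Phi C) (X, Y, f)) (Dom (Phi C) (X, Y, f))"
    using X Y f' i cC by (simp add: hom_def)
  show "iso (Phi C) (X, Y, f)" unfolding iso_def
    using X Y f' i cC q by (intro conjI bexI[of _ ?q]) (simp_all add: hom_def)
qed

end

lemma sing_obs: "permutative C \<Longrightarrow> A \<in> Ob C \<Longrightarrow> sing C A \<in> Phi_obs C"
proof -
  assume P: "permutative C" and A: "A \<in> Ob C"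
  have "{i. sing C A i \<noteq> Unit C} \<subseteq> {0}" unfolding sing_def by auto
  then have "finite {i. sing C A i \<noteq> Unit C}" by (rule finite_subset) simp
  moreover have "\<forall>i. sing C A i \<in> Ob C" unfolding sing_def using A perm_Unit[OF P] by simp
  ultimately show ?thesis unfolding Phi_obs_def by blast
qed

lemma bigten_sing: "permutative C \<Longrightarrow> A \<in> Ob C \<Longrightarrow> bigten C (sing C A) = A"
proof -
  assume P: "permutative C" and A: "A \<in> Ob C"
  have "\<forall>i\<ge>1. sing C A i = Unit C" unfolding sing_def by simp
  then have "bigten C (sing C A) = tn C (sing C A) 1" by (rule bigten_tn[OF P])
  also have "\<dots> = A" unfolding tn_def sing_def using A P by simp
  finally show ?thesis .
qed

context fixes C :: "('o, 'm) pcat" and D :: "('p, 'n) pcat" and Fo Fa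
  assumes P: "permutative C" and Q: "permutative D" and S: "strict_sym_monoidal_functor C D Fo Fa"
begin

lemma SF: "functor C D Fo Fa" using S unfolding strict_sym_monoidal_functor_def by blast
lemma S_Unit[simp]: "Fo (Unit C) = Unit D" using S unfolding strict_sym_monoidal_functor_def by blast
lemma S_Ten[simp]: "X \<in> Ob C \<Longrightarrow> Y \<in> Ob C \<Longrightarrow> Fo (Ten C X Y) = Ten D (Fo X) (Fo Y)"
  using S unfolding strict_sym_monoidal_functor_def by blast

lemma Fo_foldr: "set xs \<subseteq> Ob C \<Longrightarrow> u \<in> Ob C \<Longrightarrow> Fo (foldr (Ten C) xs u) = foldr (Ten D) (map Fo xs) (Fo u)"
proof (induction xs)
  case Nil then show ?case by simp
next
  case (Cons x xs)
  have "foldr (Ten C) xs u \<in> Ob C" using Cons.prems by (intro foldr_Ob[OF P]) auto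
  then show ?case using Cons by simp
qed

lemma Phi_ob_obs: "X \<in> Phi_obs C \<Longrightarrow> Phi_ob Fo X \<in> Phi_obs D"
proof -
  assume X: "X \<in> Phi_obs C"
  have "{i. Phi_ob Fo X i \<noteq> Unit D} \<subseteq> {i. X i \<noteq> Unit C}" unfolding Phi_ob_def by auto
  moreover have "finite {i. X i \<noteq> Unit C}" using X by (simp add: Phi_obs_def)
  ultimately have "finite {i. Phi_ob Fo X i \<noteq> Unit D}" by (rule finite_subset)
  moreover have "\<forall>i. Phi_ob Fo X i \<in> Ob D" using X SF unfolding Phi_obs_def Phi_ob_def by simp
  ultimately show ?thesis unfolding Phi_obs_def by blast
qed

lemma Fo_bigten: "X \<in> Phi_obs C \<Longrightarrow> Fo (bigten C X) = bigten D (Phi_ob Fo X)"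
proof -
  assume X: "X \<in> Phi_obs C"
  obtain N where N: "\<forall>i\<ge>N. X i = Unit C" using Phi_obs_bound[OF X] by blast
  have N': "\<forall>i\<ge>N. Phi_ob Fo X i = Unit D" using N unfolding Phi_ob_def by simp
  have Ob: "\<forall>i. X i \<in> Ob C" using X by (simp add: Phi_obs_def)
  have "Fo (bigten C X) = Fo (tn C X N)" using bigten_tn[OF P N] by simp
  also have "\<dots> = tn D (Phi_ob Fo X) N" unfolding tn_def
    using Fo_foldr[of "map X [0..<N]" "Unit C"] Ob perm_Unit[OF P] by (simp add: Phi_ob_def o_def image_subset_iff)
  also have "\<dots> = bigten D (Phi_ob Fo X)" using bigten_tn[OF Q N'] by simp
  finally show ?thesis .
qed

lemma Phi_ob_sing: "Phi_ob Fo (sing C A) = sing D (Fo A)"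
  unfolding Phi_ob_def sing_def by auto

lemma Phi_functor: "functor (Phi C) (Phi D) (Phi_ob Fo) (Phi_ar Fo Fa)"
  unfolding functor_def
proof (intro conjI ballI impI)
  fix X assume X: "X \<in> Ob (Phi C)"
  then show "Phi_ob Fo X \<in> Ob (Phi D)" using Phi_ob_obs by simp
  show "Phi_ar Fo Fa (Idn (Phi C) X) = Idn (Phi D) (Phi_ob Fo X)"
    using X SF P Fo_bigten by (simp add: Phi_ar_def)
next
  fix p assume "p \<in> Ar (Phi C)"
  then obtain X Y f where p': "p = (X, Y, f)" "X \<in> Phi_obs C" "Y \<in> Phi_obs C" "f \<in> Ar C" "Dom C f = bigten C X" "Cod C f = bigten C Y"
    by (cases rule: Phi_Ar_cases)
  show "Phi_ar Fo Fa p \<in> hom (Phi D) (Phi_ob Fo (Dom (Phi C) p)) (Phi_ob Fo (Cod (Phi C) p))"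
    using p' SF Phi_ob_obs Fo_bigten by (simp add: Phi_ar_def hom_def)
next
  fix p q assume p: "p \<in> Ar (Phi C)" and q: "q \<in> Ar (Phi C)" and pq: "Cod (Phi C) p = Dom (Phi C) q"
  from p obtain X Y f where p': "p = (X, Y, f)" "X \<in> Phi_obs C" "Y \<in> Phi_obs C" "f \<in> Ar C" "Dom C f = bigten C X" "Cod C f = bigten C Y"
    by (cases rule: Phi_Ar_cases)
  from q obtain Y' Z g where q': "q = (Y', Z, g)" "Y' \<in> Phi_obs C" "Z \<in> Phi_obs C" "g \<in> Ar C" "Dom C g = bigten C Y'" "Cod C g = bigten C Z"
    by (cases rule: Phi_Ar_cases)
  have "Y' = Y" using pq p' q' by simp
  then show "Phi_ar Fo Fa (Comp (Phi C) q p) = Comp (Phi D) (Phi_ar Fo Fa q) (Phi_ar Fo Fa p)"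
    using p' q' SF by (simp add: Phi_ar_def)
qed


lemma faithful_transfer: "faithful C Fa \<longleftrightarrow> faithful (Phi C) (Phi_ar Fo Fa)"
proof
  assume fa: "faithful C Fa"
  show "faithful (Phi C) (Phi_ar Fo Fa)" unfolding faithful_def
  proof (intro ballI impI)
    fix p q assume p: "p \<in> Ar (Phi C)" and q: "q \<in> Ar (Phi C)" and d: "Dom (Phi C) p = Dom (Phi C) q"
      and c: "Cod (Phi C) p = Cod (Phi C) q" and e: "Phi_ar Fo Fa p = Phi_ar Fo Fa q"
    from p obtain X Y f where p': "p = (X, Y, f)" "X \<in> Phi_obs C" "Y \<in> Phi_obs C" "f \<in> Ar C" "Dom C f = bigten C X" "Cod C f = bigten C Y"
      by (cases rule: Phi_Ar_cases)
    from q obtain X' Y' g where q': "q = (X', Y', g)" "X' \<in> Phi_obs C" "Y' \<in> Phi_obs C" "g \<in> Ar C" "Dom C g = bigten C X'" "Cod C g = bigten C Y'"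
      by (cases rule: Phi_Ar_cases)
    have XY: "X' = X" "Y' = Y" using d c p' q' by simp_all
    have "Fa f = Fa g" using e p' q' by (simp add: Phi_ar_def)
    then have "f = g" using fa p' q' XY unfolding faithful_def by auto
    then show "p = q" using p' q' XY by simp
  qed
next
  assume fa: "faithful (Phi C) (Phi_ar Fo Fa)"
  show "faithful C Fa" unfolding faithful_def
  proof (intro ballI impI)
    fix f g assume f: "f \<in> Ar C" and g: "g \<in> Ar C" and d: "Dom C f = Dom C g" and c: "Cod C f = Cod C g"
      and e: "Fa f = Fa g"
    note cC = perm_cat[OF P]
    let ?A = "sing C (Dom C f)" and ?B = "sing C (Cod C f)"
    have AB: "?A \<in> Phi_obs C" "?B \<in> Phi_obs C" "bigten C ?A = Dom C f" "bigten C ?B = Cod C f"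
      using f cC sing_obs[OF P] bigten_sing[OF P] by simp_all
    have fD: "\<And>p q. p \<in> Ar (Phi C) \<Longrightarrow> q \<in> Ar (Phi C) \<Longrightarrow> Dom (Phi C) p = Dom (Phi C) q \<Longrightarrow>
       Cod (Phi C) p = Cod (Phi C) q \<Longrightarrow> Phi_ar Fo Fa p = Phi_ar Fo Fa q \<Longrightarrow> p = q"
      using fa unfolding faithful_def by blast
    have "(?A, ?B, f) = (?A, ?B, g)"
      by (rule fD) (use AB f g d c e in \<open>simp_all add: hom_def Phi_ar_def\<close>)
    then show "f = g" by simp
  qed
qed

lemma full_transfer: "full C D Fo Fa \<longleftrightarrow> full (Phi C) (Phi D) (Phi_ob Fo) (Phi_ar Fo Fa)"
proof
  assume fu: "full C D Fo Fa"
  show "full (Phi C) (Phi D) (Phi_ob Fo) (Phi_ar Fo Fa)" unfolding full_def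
  proof (intro ballI)
    fix X Y q assume X: "X \<in> Ob (Phi C)" and Y: "Y \<in> Ob (Phi C)" and q: "q \<in> hom (Phi D) (Phi_ob Fo X) (Phi_ob Fo Y)"
    have "q \<in> Ar (Phi D)" "Dom (Phi D) q = Phi_ob Fo X" "Cod (Phi D) q = Phi_ob Fo Y" using q by (auto simp: hom_def)
    then obtain g where g: "q = (Phi_ob Fo X, Phi_ob Fo Y, g)" "g \<in> Ar D" "Dom D g = Fo (bigten C X)" "Cod D g = Fo (bigten C Y)"
      using X Y Fo_bigten by (cases rule: Phi_Ar_cases) auto
    have "bigten C X \<in> Ob C" "bigten C Y \<in> Ob C" using X Y bigten_Ob[OF P] by simp_all
    then obtain f where f: "f \<in> hom C (bigten C X) (bigten C Y)" "Fa f = g"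
      using fu g unfolding full_def hom_def by blast
    show "\<exists>p\<in>hom (Phi C) X Y. Phi_ar Fo Fa p = q"
      using X Y f g by (intro bexI[of _ "(X, Y, f)"]) (simp_all add: hom_def Phi_ar_def)
  qed
next
  assume fu: "full (Phi C) (Phi D) (Phi_ob Fo) (Phi_ar Fo Fa)"
  show "full C D Fo Fa" unfolding full_def
  proof (intro ballI)
    fix A B g assume A: "A \<in> Ob C" and B: "B \<in> Ob C" and g: "g \<in> hom D (Fo A) (Fo B)"
    have sA: "sing C A \<in> Phi_obs C" "sing C B \<in> Phi_obs C" using A B sing_obs[OF P] by simp_all
    have FA: "Fo A \<in> Ob D" "Fo B \<in> Ob D" using A B SF by simp_all
    have "(Phi_ob Fo (sing C A), Phi_ob Fo (sing C B), g) \<in> hom (Phi D) (Phi_ob Fo (sing C A)) (Phi_ob Fo (sing C B))"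
      using g FA Phi_ob_sing sing_obs[OF Q] bigten_sing[OF Q] by (simp add: hom_def)
    then obtain p where p: "p \<in> hom (Phi C) (sing C A) (sing C B)" "Phi_ar Fo Fa p = (Phi_ob Fo (sing C A), Phi_ob Fo (sing C B), g)"
      using fu sA unfolding full_def by force
    have "p \<in> Ar (Phi C)" "Dom (Phi C) p = sing C A" "Cod (Phi C) p = sing C B" using p by (auto simp: hom_def)
    then obtain f where f: "p = (sing C A, sing C B, f)" "f \<in> Ar C" "Dom C f = A" "Cod C f = B"
      using A B bigten_sing[OF P] by (cases rule: Phi_Ar_cases) auto
    show "\<exists>f\<in>hom C A B. Fa f = g" using f p by (intro bexI[of _ f]) (simp_all add: hom_def Phi_ar_def)
  qed
qed

lemma es_transfer: "ess_surj C D Fo \<longleftrightarrow> ess_surj (Phi C) (Phi D) (Phi_ob Fo)"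
proof
  assume es: "ess_surj C D Fo"
  note cD = perm_cat[OF Q]
  show "ess_surj (Phi C) (Phi D) (Phi_ob Fo)" unfolding ess_surj_def
  proof
    fix Y assume Y: "Y \<in> Ob (Phi D)"
    then have Yo: "\<forall>i. Y i \<in> Ob D" by (simp add: Phi_obs_def)
    let ?R = "\<lambda>i (p :: 'o \<times> 'n). fst p \<in> Ob C \<and> snd p \<in> Ar D \<and> Dom D (snd p) = Fo (fst p) \<and> Cod D (snd p) = Y i \<and> iso D (snd p)
       \<and> (Y i = Unit D \<longrightarrow> fst p = Unit C)"
    have "\<forall>i. \<exists>p. ?R i p"
    proof
      fix i
      show "\<exists>p. ?R i p"
      proof (cases "Y i = Unit D")
        case True
        then show ?thesis using cD perm_Unit[OF P] perm_Unit[OF Q]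
          by (intro exI[of _ "(Unit C, Idn D (Unit D))"]) simp
      next
        case False
        obtain A g where "A \<in> Ob C" "g \<in> hom D (Fo A) (Y i)" "iso D g"
          using es Yo unfolding ess_surj_def by blast
        then show ?thesis using False by (intro exI[of _ "(A, g)"]) (simp add: hom_def)
      qed
    qed
    then obtain h where h: "\<And>i. ?R i (h i)" by metis
    define X where "X i = fst (h i)" for i
    define g where "g i = snd (h i)" for i
    have Xi: "X i \<in> Ob C" "g i \<in> Ar D" "Dom D (g i) = Fo (X i)" "Cod D (g i) = Y i" "iso D (g i)"
      "Y i = Unit D \<Longrightarrow> X i = Unit C" for i
      using h[of i] unfolding X_def g_def by auto
    obtain N where N: "\<forall>i\<ge>N. Y i = Unit D" using Phi_obs_bound Y by force
    have NX: "\<forall>i\<ge>N. X i = Unit C" using N Xi by blast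
    have X: "X \<in> Phi_obs C" unfolding Phi_obs_def
    proof (intro CollectI conjI allI)
      show "X i \<in> Ob C" for i by (rule Xi)
      have "{i. X i \<noteq> Unit C} \<subseteq> {..<N}"
      proof (rule subsetI)
        fix x assume "x \<in> {i. X i \<noteq> Unit C}"
        then have "X x \<noteq> Unit C" by simp
        then show "x \<in> {..<N}" using NX by (metis lessThan_iff not_le)
      qed
      then show "finite {i. X i \<noteq> Unit C}" by (rule finite_subset) simp
    qed
    have NFX: "\<forall>i\<ge>N. Phi_ob Fo X i = Unit D" using NX by (simp add: Phi_ob_def)
    define G where "G = foldr (TenA D) (map g [0..<N]) (Idn D (Unit D))"
    have GG: "G \<in> Ar D \<and> Dom D G = foldr (Ten D) (map (Dom D) (map g [0..<N])) (Unit D) \<and>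
       Cod D G = foldr (Ten D) (map (Cod D) (map g [0..<N])) (Unit D) \<and> iso D G"
      unfolding G_def by (rule foldr_iso[OF Q]) (use Xi in auto)
    have m1: "map (Dom D) (map g [0..<N]) = map (Phi_ob Fo X) [0..<N]" using Xi by (simp add: Phi_ob_def)
    have m2: "map (Cod D) (map g [0..<N]) = map Y [0..<N]" using Xi by simp
    have G: "G \<in> Ar D" "Dom D G = bigten D (Phi_ob Fo X)" "Cod D G = bigten D Y" "iso D G"
      using GG[unfolded m1 m2] bigten_tn[OF Q NFX] bigten_tn[OF Q N] unfolding tn_def by simp_all
    have FX: "Phi_ob Fo X \<in> Phi_obs D" using Phi_ob_obs X by blast
    have Yo': "Y \<in> Phi_obs D" using Y by simp
    have "iso (Phi D) (Phi_ob Fo X, Y, G)" using Phi_iso[OF Q FX Yo'] G by (simp add: hom_def)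
    then show "\<exists>A\<in>Ob (Phi C). \<exists>q. q \<in> hom (Phi D) (Phi_ob Fo A) Y \<and> iso (Phi D) q"
      using X FX Yo' G by (intro bexI[of _ X] exI[of _ "(Phi_ob Fo X, Y, G)"]) (simp_all add: hom_def)
  qed
next
  assume es: "ess_surj (Phi C) (Phi D) (Phi_ob Fo)"
  show "ess_surj C D Fo" unfolding ess_surj_def
  proof
    fix B assume B: "B \<in> Ob D"
    have sB: "sing D B \<in> Phi_obs D" "bigten D (sing D B) = B" using B sing_obs[OF Q] bigten_sing[OF Q] by simp_all
    obtain X q where X: "X \<in> Phi_obs C" and q: "q \<in> hom (Phi D) (Phi_ob Fo X) (sing D B)" "iso (Phi D) q"
      using es sB unfolding ess_surj_def by force
    have "q \<in> Ar (Phi D)" "Dom (Phi D) q = Phi_ob Fo X" "Cod (Phi D) q = sing D B" using q by (auto simp: hom_def)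
    then obtain g where g: "q = (Phi_ob Fo X, sing D B, g)" "g \<in> hom D (bigten D (Phi_ob Fo X)) (bigten D (sing D B))"
      by (cases rule: Phi_Ar_cases) (auto simp: hom_def)
    have FX: "Phi_ob Fo X \<in> Phi_obs D" using Phi_ob_obs X by blast
    have "iso D g" using Phi_iso[OF Q FX sB(1) g(2)] q g by simp
    moreover have "g \<in> hom D (Fo (bigten C X)) B" using g sB Fo_bigten[OF X] by simp
    moreover have "bigten C X \<in> Ob C" using X bigten_Ob[OF P] by simp
    ultimately show "\<exists>A\<in>Ob C. \<exists>g. g \<in> hom D (Fo A) B \<and> iso D g" by blast
  qed
qed

end

theorem lemma1p25:
  fixes C :: "('o, 'm) pcat" and D :: "('p, 'n) pcat"
    and Fo :: "'o \<Rightarrow> 'p" and Fa :: "'m \<Rightarrow> 'n"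
  assumes "permutative C" and "permutative D"
    and "strict_sym_monoidal_functor C D Fo Fa"
  shows "equivalence C D Fo Fa \<longleftrightarrow> equivalence (Phi C) (Phi D) (Phi_ob Fo) (Phi_ar Fo Fa)"
proof -
  have "equivalence C D Fo Fa \<longleftrightarrow> faithful C Fa \<and> full C D Fo Fa \<and> ess_surj C D Fo"
    by (rule equiv_iff[OF perm_cat[OF assms(1)] perm_cat[OF assms(2)] SF[OF assms]])
  also have "\<dots> \<longleftrightarrow> faithful (Phi C) (Phi_ar Fo Fa) \<and> full (Phi C) (Phi D) (Phi_ob Fo) (Phi_ar Fo Fa)
      \<and> ess_surj (Phi C) (Phi D) (Phi_ob Fo)"
    using faithful_transfer[OF assms] full_transfer[OF assms] es_transfer[OF assms] by simp
  also have "\<dots> \<longleftrightarrow> equivalence (Phi C) (Phi D) (Phi_ob Fo) (Phi_ar Fo Fa)"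
    by (rule equiv_iff[OF Phi_category[OF assms(1)] Phi_category[OF assms(2)] Phi_functor[OF assms], symmetric])
  finally show ?thesis .
qed

end
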